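(* Let $\{J_e\}$ be i.i.d. couplings with a common continuous distribution on $(0,\infty)$, indexed by the nearest-neighbor edges $e=\{x,x+1\}$ of $\mathbb Z$. For $x\in\mathbb Z$, let $z(x)\in\{x-1,x+1\}$ be the neighbor with $J_{x,z(x)}=\max\{J_{x,x-1},J_{x,x+1}\}$. Let $x_0=0$ and $x_{j+1}=z(x_j)$ for $j\ge0$, and define $$\tilde M=\min\{m\ge0: x_{m+2}=x_m\}.$$ Then $\tilde M$ is almost surely finite and, for every integer $k\ge0$, $$\mathbb P_J(\tilde M\ge k)=\frac{2}{(k+2)!},\qquad \mathbb P_J(\tilde M=k)=\frac{2(k+2)}{(k+3)!}.$$
   Context: $\tilde M$ is the number of steps from the origin along the directed path $x\mapsto z(x)$ until reaching an edge $\{x_m,z(x_m)\}$ with $z(z(x_m))=x_m$ (a "bully bond"). *)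

theory Defs
  imports "HOL-Probability.Probability"
begin

text \<open>A coupling configuration on the edges of Z is a function j :: int => real,
  where j x is the coupling J of the edge {x, x+1}.  Thus the two edges at x
  carry j (x-1) (edge {x-1,x}) and j x (edge {x,x+1}).\<close>

definition nbr :: "(int \<Rightarrow> real) \<Rightarrow> int \<Rightarrow> int" where
  "nbr j x = (if j (x - 1) < j x then x + 1 else x - 1)"

text \<open>Ties (probability zero) are broken towards x-1.\<close>

fun walk :: "(int \<Rightarrow> real) \<Rightarrow> nat \<Rightarrow> int" where
  "walk j 0 = 0"
| "walk j (Suc n) = nbr j (walk j n)"

definition Mtilde :: "(int \<Rightarrow> real) \<Rightarrow> enat" where
  "Mtilde j = (if \<exists>m. walk j (m + 2) = walk j m
               then enat (LEAST m. walk j (m + 2) = walk j m) else \<infinity>)"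

end

theory Submission
  imports Defs "HOL-Combinatorics.Permutations"
begin

definition rk :: "(nat \<Rightarrow> real) \<Rightarrow> nat \<Rightarrow> nat \<Rightarrow> nat" where
  "rk x n k = card {k'\<in>{..<n}. x k' < x k}"

lemma rk_less:
  assumes "a < n" "b < n" "x a < x b"
  shows "rk x n a < rk x n b"
  unfolding rk_def
proof (rule psubset_card_mono)
  show "finite {k' \<in> {..<n}. x k' < x b}" by simp
  show "{k' \<in> {..<n}. x k' < x a} \<subset> {k' \<in> {..<n}. x k' < x b}"
    using assms by auto
qed

lemma rk_bound:
  assumes "k < n"
  shows "rk x n k < n"
proof -
  have "{k'\<in>{..<n}. x k' < x k} \<subseteq> {..<n} - {k}" by auto
  hence "rk x n k \<le> card ({..<n} - {k})" unfolding rk_def by (intro card_mono) auto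
  also have "\<dots> < n" using assms by simp
  finally show ?thesis .
qed

lemma rk_inj:
  assumes "inj_on x {..<n}"
  shows "inj_on (rk x n) {..<n}"
proof (rule inj_onI)
  fix a b assume ab: "a \<in> {..<n}" "b \<in> {..<n}" "rk x n a = rk x n b"
  show "a = b"
  proof (rule ccontr)
    assume "a \<noteq> b"
    hence "x a \<noteq> x b" using assms ab by (meson inj_onD)
    hence "x a < x b \<or> x b < x a" by linarith
    thus False using rk_less[of a n b x] rk_less[of b n a x] ab by auto
  qed
qed

lemma rk_bij:
  assumes "inj_on x {..<n}"
  shows "bij_betw (rk x n) {..<n} {..<n}"
proof -
  have "rk x n ` {..<n} \<subseteq> {..<n}" using rk_bound by auto
  moreover have "card (rk x n ` {..<n}) = card {..<n::nat}"
    using card_image[OF rk_inj[OF assms]] by simp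
  ultimately have "rk x n ` {..<n} = {..<n}"
    by (intro card_subset_eq) auto
  thus ?thesis using rk_inj[OF assms] by (simp add: bij_betw_def)
qed

definition chain :: "(nat \<Rightarrow> real) \<Rightarrow> nat \<Rightarrow> (nat \<Rightarrow> nat) \<Rightarrow> bool" where
  "chain x n s \<longleftrightarrow> (\<forall>i. Suc i < n \<longrightarrow> x (s i) < x (s (Suc i)))"

lemma chain_mono:
  assumes "chain x n s" "i < j" "j < n"
  shows "x (s i) < x (s j)"
  using assms(2,3)
proof (induction j)
  case 0 then show ?case by simp
next
  case (Suc j)
  have c: "x (s j) < x (s (Suc j))" using assms(1) Suc.prems unfolding chain_def by auto
  show ?case
  proof (cases "i = j")
    case True then show ?thesis using c by simp
  next
    case False then show ?thesis using Suc c by auto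
  qed
qed

lemma chain_rk:
  assumes "s permutes {..<n}" "chain x n s" "i < n"
  shows "rk x n (s i) = i"
proof -
  have "{k'\<in>{..<n}. x k' < x (s i)} = s ` {..<i}"
  proof
    show "s ` {..<i} \<subseteq> {k' \<in> {..<n}. x k' < x (s i)}"
    proof
      fix k assume "k \<in> s ` {..<i}"
      then obtain m where m: "m < i" "k = s m" by auto
      hence "s m \<in> {..<n}" using assms permutes_in_image[OF assms(1)] by auto
      thus "k \<in> {k' \<in> {..<n}. x k' < x (s i)}" using m chain_mono[OF assms(2) m(1) assms(3)] by auto
    qed
  next
    show "{k' \<in> {..<n}. x k' < x (s i)} \<subseteq> s ` {..<i}"
    proof
      fix k assume k: "k \<in> {k' \<in> {..<n}. x k' < x (s i)}"
      hence "k \<in> s ` {..<n}" using permutes_image[OF assms(1)] by auto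
      then obtain m where m: "m < n" "k = s m" by auto
      have "m < i"
      proof (rule ccontr)
        assume "\<not> m < i"
        hence "m = i \<or> i < m" by auto
        thus False using k m chain_mono[OF assms(2), of i m] by auto
      qed
      thus "k \<in> s ` {..<i}" using m by auto
    qed
  qed
  moreover have "inj_on s {..<i}" using permutes_inj[OF assms(1)] by (rule inj_on_subset) auto
  ultimately show ?thesis unfolding rk_def by (simp add: card_image)
qed

lemma chain_inj:
  assumes "s permutes {..<n}" "chain x n s"
  shows "inj_on x {..<n}"
proof (rule inj_onI)
  fix a b assume ab: "a \<in> {..<n}" "b \<in> {..<n}" "x a = x b"
  have "a \<in> s ` {..<n}" "b \<in> s ` {..<n}" using ab permutes_image[OF assms(1)] by auto
  then obtain i j where ij: "i < n" "j < n" "a = s i" "b = s j" by auto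
  have "i = j"
  proof (rule ccontr)
    assume "i \<noteq> j"
    hence "i < j \<or> j < i" by auto
    thus False using chain_mono[OF assms(2), of i j] chain_mono[OF assms(2), of j i] ij ab by auto
  qed
  thus "a = b" using ij by simp
qed

lemma chain_unique:
  assumes "s permutes {..<n}" "t permutes {..<n}" "chain x n s" "chain x n t"
  shows "s = t"
proof
  fix i show "s i = t i"
  proof (cases "i < n")
    case True
    have "s i < n" "t i < n" using True permutes_in_image[OF assms(1), of i] permutes_in_image[OF assms(2), of i] by auto
    moreover have "rk x n (s i) = rk x n (t i)" using chain_rk assms True by simp
    ultimately show ?thesis using rk_inj[OF chain_inj[OF assms(1,3)]] by (auto dest: inj_onD)
  next
    case False then show ?thesis using assms(1,2) by (simp add: permutes_def)
  qed
qed

lemma chain_exists: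
  assumes "inj_on x {..<n}"
  shows "\<exists>s. s permutes {..<n} \<and> chain x n s"
proof -
  define s where "s = (\<lambda>i. if i < n then the_inv_into {..<n} (rk x n) i else i)"
  have b: "bij_betw (the_inv_into {..<n} (rk x n)) {..<n} {..<n}"
    using bij_betw_the_inv_into[OF rk_bij[OF assms]] .
  have "bij_betw s {..<n} {..<n}"
    using b by (rule bij_betw_cong[THEN iffD1, rotated]) (simp add: s_def)
  hence sp: "s permutes {..<n}" by (rule bij_imp_permutes) (simp add: s_def)
  have r: "rk x n (s i) = i" if "i < n" for i
    using that rk_bij[OF assms] unfolding s_def
    by (simp add: f_the_inv_into_f_bij_betw)
  have "chain x n s"
    unfolding chain_def
  proof (intro allI impI)
    fix i assume i: "Suc i < n"
    have si: "s i < n" "s (Suc i) < n" using i permutes_in_image[OF sp, of i] permutes_in_image[OF sp, of "Suc i"] by auto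
    show "x (s i) < x (s (Suc i))"
    proof (rule ccontr)
      assume "\<not> x (s i) < x (s (Suc i))"
      hence "x (s (Suc i)) < x (s i) \<or> x (s (Suc i)) = x (s i)" by auto
      thus False
      proof
        assume "x (s (Suc i)) < x (s i)"
        hence "rk x n (s (Suc i)) < rk x n (s i)" by (rule rk_less[OF si(2) si(1)])
        thus False using r[of i] r[of "Suc i"] i by auto
      next
        assume "x (s (Suc i)) = x (s i)"
        hence "s (Suc i) = s i" using assms si by (auto dest: inj_onD)
        thus False using r[of i] r[of "Suc i"] i by auto
      qed
    qed
  qed
  thus ?thesis using sp by blast
qed

definition RR :: "nat \<Rightarrow> (int \<Rightarrow> real) \<Rightarrow> bool" where
  "RR k j \<longleftrightarrow> (\<forall>i\<le>k. j (int i - 1) < j (int i))"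
definition LL :: "nat \<Rightarrow> (int \<Rightarrow> real) \<Rightarrow> bool" where
  "LL k j \<longleftrightarrow> (\<forall>i\<le>k. j (- int i) \<le> j (- int i - 1))"

lemma walk_R: "RR k j \<Longrightarrow> m \<le> k + 1 \<Longrightarrow> walk j m = int m"
proof (induction m)
  case 0 then show ?case by simp
next
  case (Suc m)
  have "j (int m - 1) < j (int m)" using Suc.prems unfolding RR_def by auto
  then show ?case using Suc by (simp add: nbr_def)
qed

lemma walk_L: "LL k j \<Longrightarrow> m \<le> k + 1 \<Longrightarrow> walk j m = - int m"
proof (induction m)
  case 0 then show ?case by simp
next
  case (Suc m)
  have "j (- int m) \<le> j (- int m - 1)" using Suc.prems unfolding LL_def by auto
  then show ?case using Suc by (simp add: nbr_def)
qed

lemma walk_char: "(\<forall>m<k. walk j (m + 2) \<noteq> walk j m) \<longleftrightarrow> RR k j \<or> LL k j"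
proof
  show "(\<forall>m<k. walk j (m + 2) \<noteq> walk j m) \<Longrightarrow> RR k j \<or> LL k j"
  proof (induction k)
    case 0 then show ?case unfolding RR_def LL_def by auto
  next
    case (Suc k)
    hence IH: "RR k j \<or> LL k j" by auto
    have ne: "walk j (k + 2) \<noteq> walk j k" using Suc.prems by auto
    show ?case using IH
    proof
      assume R: "RR k j"
      have w1: "walk j (k+1) = int k + 1" using walk_R[OF R, of "k+1"] by simp
      have w0: "walk j k = int k" using walk_R[OF R, of k] by simp
      have "walk j (k+2) = nbr j (int k + 1)" using w1 by (simp add: numeral_2_eq_2)
      hence "j (int k) < j (int k + 1)" using ne w0 by (auto simp: nbr_def split: if_splits)
      hence "RR (Suc k) j" using R unfolding RR_def
        by (auto simp: le_Suc_eq add.commute)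
      thus ?thesis by simp
    next
      assume L: "LL k j"
      have w1: "walk j (k+1) = - int k - 1" using walk_L[OF L, of "k+1"] by simp
      have w0: "walk j k = - int k" using walk_L[OF L, of k] by simp
      have "walk j (k+2) = nbr j (- int k - 1)" using w1 by (simp add: numeral_2_eq_2)
      hence "j (- int k - 1) \<le> j (- int k - 1 - 1)" using ne w0 by (auto simp: nbr_def split: if_splits)
      hence "LL (Suc k) j" using L unfolding LL_def
      proof (intro allI impI)
        fix i assume i: "i \<le> Suc k"
        show "j (- int i) \<le> j (- int i - 1)"
        proof (cases "i = Suc k")
          case True
          have e1: "- int i = - int k - 1" using True by auto
          show ?thesis unfolding e1 by (rule \<open>j (- int k - 1) \<le> j (- int k - 1 - 1)\<close>)
        next
          case False thus ?thesis using i L unfolding LL_def by auto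
        qed
      qed
      thus ?thesis by simp
    qed
  qed
next
  assume "RR k j \<or> LL k j"
  thus "\<forall>m<k. walk j (m + 2) \<noteq> walk j m"
  proof
    assume R: "RR k j"
    show ?thesis
    proof (intro allI impI)
      fix m assume "m < k"
      thus "walk j (m + 2) \<noteq> walk j m" using walk_R[OF R, of "m+2"] walk_R[OF R, of m] by simp
    qed
  next
    assume L: "LL k j"
    show ?thesis
    proof (intro allI impI)
      fix m assume "m < k"
      thus "walk j (m + 2) \<noteq> walk j m" using walk_L[OF L, of "m+2"] walk_L[OF L, of m] by simp
    qed
  qed
qed

lemma Mtilde_ge: "enat k \<le> Mtilde j \<longleftrightarrow> (\<forall>m<k. walk j (m + 2) \<noteq> walk j m)"
proof (cases "\<exists>m. walk j (m + 2) = walk j m")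
  case True
  hence M: "Mtilde j = enat (LEAST m. walk j (m + 2) = walk j m)" by (simp add: Mtilde_def)
  let ?P = "\<lambda>m. walk j (m + 2) = walk j m"
  have PL: "?P (LEAST m. ?P m)" using True by (rule LeastI_ex) 
  show ?thesis unfolding M enat_ord_simps(1)
  proof
    assume "k \<le> (LEAST m. ?P m)"
    thus "\<forall>m<k. \<not> ?P m"
    proof (intro allI impI)
      fix m assume "k \<le> (LEAST m. ?P m)" "m < k"
      hence "m < (LEAST m. ?P m)" by simp
      thus "\<not> ?P m" by (rule not_less_Least)
    qed
  next
    assume "\<forall>m<k. \<not> ?P m"
    thus "k \<le> (LEAST m. ?P m)" using PL not_le by blast
  qed
next
  case False then show ?thesis by (simp add: Mtilde_def)
qed

lemma RL_disj: "RR k j \<Longrightarrow> LL k j \<Longrightarrow> False"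
  unfolding RR_def LL_def
proof -
  assume "\<forall>i\<le>k. j (int i - 1) < j (int i)" "\<forall>i\<le>k. j (- int i) \<le> j (- int i - 1)"
  hence "j (int 0 - 1) < j (int 0)" "j (- int 0) \<le> j (- int 0 - 1)" by blast+
  thus False by simp
qed

lemma (in prob_space) indep_vars_reindex:
  assumes "indep_vars M' X (e ` K)" "inj_on e K"
  shows "indep_vars (\<lambda>i. M' (e i)) (\<lambda>i. X (e i)) K"
proof -
  let ?F = "\<lambda>i. {X i -` A \<inter> space M | A. A \<in> sets (M' i)}"
  have rv: "\<forall>i\<in>e`K. random_variable (M' i) (X i)" and ind: "indep_sets ?F (e ` K)"
    using assms(1) unfolding indep_vars_def2 by auto
  have "indep_sets (\<lambda>i. ?F (e i)) K"
    unfolding indep_sets_def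
  proof (intro conjI ballI allI impI)
    fix i assume "i \<in> K" thus "?F (e i) \<subseteq> events" using ind unfolding indep_sets_def by auto
  next
    fix L A assume L: "L \<subseteq> K" "L \<noteq> {}" "finite L" and A: "A \<in> Pi L (\<lambda>i. ?F (e i))"
    define A' where "A' = (\<lambda>i. A (the_inv_into K e i))"
    have inv: "the_inv_into K e (e l) = l" if "l \<in> L" for l
      using that L assms(2) by (intro the_inv_into_f_f) auto
    have injL: "inj_on e L" using inj_on_subset[OF assms(2) L(1)] .
    have A': "A' \<in> Pi (e ` L) ?F"
    proof (rule Pi_I)
      fix y assume "y \<in> e ` L"
      then obtain l where l: "l \<in> L" "y = e l" by auto
      have "A l \<in> ?F (e l)" using A l(1) by (rule Pi_mem)
      thus "A' y \<in> ?F y" using l inv by (simp add: A'_def)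
    qed
    have "prob (\<Inter>j\<in>e`L. A' j) = (\<Prod>j\<in>e`L. prob (A' j))"
    proof -
      have "\<forall>L'\<subseteq>e ` K. L' \<noteq> {} \<longrightarrow> finite L' \<longrightarrow> (\<forall>A\<in>Pi L' ?F. prob (\<Inter>j\<in>L'. A j) = (\<Prod>j\<in>L'. prob (A j)))"
        using ind unfolding indep_sets_def by blast
      moreover have "e ` L \<subseteq> e ` K" "e ` L \<noteq> {}" "finite (e ` L)" using L by auto
      ultimately show ?thesis using A' by blast
    qed
    moreover have "(\<Inter>j\<in>e`L. A' j) = (\<Inter>j\<in>L. A j)" using inv by (auto simp: A'_def)
    moreover have "(\<Prod>j\<in>e`L. prob (A' j)) = (\<Prod>j\<in>L. prob (A j))"
      using injL inv by (simp add: prod.reindex A'_def)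
    ultimately show "prob (\<Inter>j\<in>L. A j) = (\<Prod>j\<in>L. prob (A j))" by simp
  qed
  thus ?thesis using rv unfolding indep_vars_def2 by auto
qed

locale iidJ = prob_space M for M :: "'a measure" +
  fixes J :: "int \<Rightarrow> 'a \<Rightarrow> real" and D :: "real measure"
  assumes ind: "prob_space.indep_vars M (\<lambda>_. borel) J UNIV"
    and dist: "\<And>e. distr M borel (J e) = D"
    and atom: "\<And>x. emeasure D {x} = 0"
begin

lemma Jmeas[measurable]: "J e \<in> borel_measurable M"
  using ind unfolding indep_vars_def by auto

lemma law:
  assumes "inj_on e {..<n::nat}" "0 < n"
  shows "distr M (PiM {..<n} (\<lambda>_. borel)) (\<lambda>\<omega>. \<lambda>i\<in>{..<n}. J (e i) \<omega>) = PiM {..<n} (\<lambda>_. D)"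
proof -
  have "indep_vars (\<lambda>_. borel) J (e ` {..<n})" using ind by (rule indep_vars_subset) auto
  hence i2: "indep_vars (\<lambda>_. borel) (\<lambda>i. J (e i)) {..<n}"
    using indep_vars_reindex[OF _ assms(1)] by auto
  have "distr M (PiM {..<n} (\<lambda>_. borel)) (\<lambda>\<omega>. \<lambda>i\<in>{..<n}. J (e i) \<omega>) =
        PiM {..<n} (\<lambda>i. distr M borel (J (e i)))"
    using i2 assms(2) indep_vars_iff_distr_eq_PiM'[where I="{..<n}" and M'="\<lambda>_. borel" and X="\<lambda>i. J (e i)"] by (auto simp: lessThan_empty_iff)
  thus ?thesis by (simp add: dist)
qed

definition Inc :: "nat \<Rightarrow> (nat \<Rightarrow> real) set" where
  "Inc n = {x\<in>space (PiM {..<n} (\<lambda>_. borel::real measure)). \<forall>i. Suc i < n \<longrightarrow> x i < x (Suc i)}"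

lemma Inc_sets: "Inc n \<in> sets (PiM {..<n} (\<lambda>_. borel::real measure))"
proof -
  have "Measurable.pred (PiM {..<n} (\<lambda>_. borel::real measure)) (\<lambda>x. Suc i < n \<longrightarrow> x i < x (Suc i))" for i
  proof (cases "Suc i < n")
    case True
    have [measurable]: "(\<lambda>x. x i) \<in> borel_measurable (PiM {..<n} (\<lambda>_. borel::real measure))"
      "(\<lambda>x. x (Suc i)) \<in> borel_measurable (PiM {..<n} (\<lambda>_. borel::real measure))"
      using True by (auto intro!: measurable_component_singleton)
    have "Measurable.pred (PiM {..<n} (\<lambda>_. borel::real measure)) (\<lambda>x. x i < x (Suc i))"
      by (rule borel_measurable_pred_less) (use True in \<open>auto intro!: measurable_component_singleton\<close>)
    thus ?thesis using True by simp
  next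
    case False thus ?thesis by simp
  qed
  hence "Measurable.pred (PiM {..<n} (\<lambda>_. borel::real measure)) (\<lambda>x. \<forall>i. Suc i < n \<longrightarrow> x i < x (Suc i))"
    by measurable
  thus ?thesis unfolding Inc_def by measurable
qed

lemma chain_prob:
  assumes "inj_on e {..<n::nat}" "0 < n"
  shows "prob {\<omega>\<in>space M. \<forall>i. Suc i < n \<longrightarrow> J (e i) \<omega> < J (e (Suc i)) \<omega>}
         = measure (PiM {..<n} (\<lambda>_. D)) (Inc n)"
proof -
  let ?v = "\<lambda>\<omega>. \<lambda>i\<in>{..<n}. J (e i) \<omega>"
  have vm: "?v \<in> measurable M (PiM {..<n} (\<lambda>_. borel))" by measurable
  have "measure (PiM {..<n} (\<lambda>_. D)) (Inc n) = measure (distr M (PiM {..<n} (\<lambda>_. borel)) ?v) (Inc n)"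
    using law[OF assms] by simp
  also have "\<dots> = measure M (?v -` Inc n \<inter> space M)"
    by (rule measure_distr[OF vm Inc_sets])
  also have "?v -` Inc n \<inter> space M = {\<omega>\<in>space M. \<forall>i. Suc i < n \<longrightarrow> J (e i) \<omega> < J (e (Suc i)) \<omega>}"
    unfolding Inc_def using measurable_space[OF vm] by auto
  finally show ?thesis by simp
qed

lemma tie:
  assumes "a \<noteq> b"
  shows "prob {\<omega>\<in>space M. J a \<omega> = J b \<omega>} = 0"
proof -
  let ?e = "case_bool a b"
  have "inj_on ?e UNIV" using assms by (auto simp: inj_on_def split: bool.splits)
  moreover have "indep_vars (\<lambda>_. borel) J (?e ` UNIV)" using ind by (rule indep_vars_subset) auto
  ultimately have "indep_vars (\<lambda>_. borel) (\<lambda>i. J (?e i)) UNIV"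
    using indep_vars_reindex by auto
  hence "indep_var borel (J a) borel (J b)"
    unfolding indep_var_def by (rule indep_vars_cong[THEN iffD1, rotated -1]) (auto split: bool.splits)
  hence "distr M borel (J a) \<Otimes>\<^sub>M distr M borel (J b) = distr M (borel \<Otimes>\<^sub>M borel) (\<lambda>x. (J a x, J b x))"
    by (simp add: indep_var_distribution_eq)
  hence eq: "D \<Otimes>\<^sub>M D = distr M (borel \<Otimes>\<^sub>M borel) (\<lambda>x. (J a x, J b x))"
    by (simp add: dist)
  have "{p\<in>space (borel \<Otimes>\<^sub>M borel). fst p = (snd p::real)} \<in> sets (borel \<Otimes>\<^sub>M borel)" by measurable
  moreover have "{p\<in>space (borel \<Otimes>\<^sub>M borel). fst p = (snd p::real)} = {p::real\<times>real. fst p = snd p}"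
    unfolding space_pair_measure by auto
  ultimately have dg: "{p::real\<times>real. fst p = snd p} \<in> sets (borel \<Otimes>\<^sub>M borel)" by simp
  have "prob_space (distr M borel (J a))" by (rule prob_space_distr) simp
  hence "prob_space D" by (simp only: dist)
  then interpret Dp: prob_space D .
  have "emeasure (D \<Otimes>\<^sub>M D) {p. fst p = snd p} = (\<integral>\<^sup>+x. emeasure D (Pair x -` {p. fst p = snd p}) \<partial>D)"
  proof -
    have sD: "sets D = sets (borel::real measure)" unfolding dist[of a, symmetric] by simp
    have "{p::real\<times>real. fst p = snd p} \<in> sets (D \<Otimes>\<^sub>M D)"
      using dg sets_pair_measure_cong[OF sD sD] by simp
    thus ?thesis by (rule Dp.emeasure_pair_measure_alt)
  qed
  also have "\<dots> = 0"
  proof -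
    have e: "\<And>x. Pair x -` {p::real\<times>real. fst p = snd p} = {x}" by auto
    show ?thesis unfolding e atom by simp
  qed
  finally have "measure (D \<Otimes>\<^sub>M D) {p. fst p = snd p} = 0" by (simp add: measure_def)
  hence "measure (distr M (borel \<Otimes>\<^sub>M borel) (\<lambda>x. (J a x, J b x))) {p. fst p = snd p} = 0"
    using eq by simp
  moreover have "measure (distr M (borel \<Otimes>\<^sub>M borel) (\<lambda>x. (J a x, J b x))) {p. fst p = snd p}
      = prob ((\<lambda>x. (J a x, J b x)) -` {p. fst p = snd p} \<inter> space M)"
    by (rule measure_distr) (measurable, rule dg)
  moreover have "(\<lambda>x. (J a x, J b x)) -` {p. fst p = snd p} \<inter> space M = {\<omega>\<in>space M. J a \<omega> = J b \<omega>}"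
    by auto
  ultimately show ?thesis by simp
qed

end

context iidJ begin

lemma null_union:
  assumes "finite I" "\<And>i. i \<in> I \<Longrightarrow> A i \<in> events" "\<And>i. i \<in> I \<Longrightarrow> prob (A i) = 0"
  shows "prob (\<Union>i\<in>I. A i) = 0"
proof -
  have "prob (\<Union>i\<in>I. A i) \<le> (\<Sum>i\<in>I. prob (A i))"
    using assms by (intro finite_measure_subadditive_finite) auto
  also have "\<dots> = 0" using assms(3) by simp
  finally show ?thesis using measure_nonneg[of M "\<Union>i\<in>I. A i"] by linarith
qed

lemma tie_sets: "{\<omega>\<in>space M. J a \<omega> = J b \<omega>} \<in> events" by measurable

lemma q_val:
  assumes n: "0 < n"
  shows "measure (PiM {..<n} (\<lambda>_. D)) (Inc n) = 1 / fact n"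
proof -
  let ?c = "measure (PiM {..<n} (\<lambda>_. D)) (Inc n)"
  define E where "E = (\<lambda>\<sigma>. {\<omega>\<in>space M. chain (\<lambda>k. J (int k) \<omega>) n \<sigma>})"
  define P where "P = {\<sigma>. \<sigma> permutes {..<n::nat}}"
  have finP: "finite P" unfolding P_def by (rule finite_permutations) simp
  have cardP: "card P = fact n" unfolding P_def by (rule card_permutations) simp_all
  have Ec: "prob (E \<sigma>) = ?c" if "\<sigma> \<in> P" for \<sigma>
  proof -
    have "inj_on (\<lambda>i. int (\<sigma> i)) {..<n}"
      using permutes_inj[of \<sigma> "{..<n}"] that unfolding P_def by (auto simp: inj_on_def inj_def)
    from chain_prob[OF this n] show ?thesis unfolding E_def chain_def by simp
  qed
  have Es: "E \<sigma> \<in> events" for \<sigma> unfolding E_def chain_def by measurable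
  have disj: "disjoint_family_on E P"
    unfolding disjoint_family_on_def
  proof (intro ballI impI)
    fix s t assume st: "s \<in> P" "t \<in> P" "s \<noteq> t"
    show "E s \<inter> E t = {}"
    proof (rule ccontr)
      assume "E s \<inter> E t \<noteq> {}"
      then obtain \<omega> where "\<omega> \<in> E s" "\<omega> \<in> E t" by blast
      hence "chain (\<lambda>k. J (int k) \<omega>) n s" "chain (\<lambda>k. J (int k) \<omega>) n t" unfolding E_def by auto
      hence "s = t" using chain_unique st unfolding P_def by blast
      thus False using st by simp
    qed
  qed
  have sumE: "prob (\<Union>\<sigma>\<in>P. E \<sigma>) = fact n * ?c"
  proof -
    have "prob (\<Union>\<sigma>\<in>P. E \<sigma>) = (\<Sum>\<sigma>\<in>P. prob (E \<sigma>))"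
      using finP Es disj by (intro finite_measure_finite_Union) auto
    also have "\<dots> = (\<Sum>\<sigma>\<in>P. ?c)" using Ec by simp
    also have "\<dots> = fact n * ?c" using cardP by simp
    finally show ?thesis .
  qed
  define Q where "Q = {p::nat\<times>nat. fst p < n \<and> snd p < n \<and> fst p \<noteq> snd p}"
  define T where "T = (\<Union>p\<in>Q. {\<omega>\<in>space M. J (int (fst p)) \<omega> = J (int (snd p)) \<omega>})"
  have finQ: "finite Q"
  proof -
    have "Q \<subseteq> {..<n} \<times> {..<n}" unfolding Q_def by auto
    thus ?thesis by (rule finite_subset) simp
  qed
  have T0: "prob T = 0" unfolding T_def
    using finQ by (intro null_union tie_sets tie) (auto simp: Q_def)
  have Tev: "T \<in> events" unfolding T_def using finQ tie_sets by (intro sets.finite_UN) auto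
  have sub: "space M - T \<subseteq> (\<Union>\<sigma>\<in>P. E \<sigma>)"
  proof
    fix \<omega> assume w: "\<omega> \<in> space M - T"
    have "inj_on (\<lambda>k. J (int k) \<omega>) {..<n}"
    proof (rule inj_onI)
      fix a b assume ab: "a \<in> {..<n}" "b \<in> {..<n}" "J (int a) \<omega> = J (int b) \<omega>"
      show "a = b"
      proof (rule ccontr)
        assume "a \<noteq> b"
        hence "(a, b) \<in> Q" using ab unfolding Q_def by auto
        hence "\<omega> \<in> T" using ab w unfolding T_def by force
        thus False using w by blast
      qed
    qed
    then obtain s where "s permutes {..<n}" "chain (\<lambda>k. J (int k) \<omega>) n s"
      using chain_exists by blast
    thus "\<omega> \<in> (\<Union>\<sigma>\<in>P. E \<sigma>)" using w unfolding P_def E_def by auto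
  qed
  have "1 = prob (space M - T)" using prob_compl[OF Tev] T0 by simp
  also have "\<dots> \<le> prob (\<Union>\<sigma>\<in>P. E \<sigma>)"
    using sub Es finP by (intro finite_measure_mono) auto
  finally have ge: "1 \<le> fact n * ?c" using sumE by simp
  have "fact n * ?c \<le> 1" using sumE[symmetric] by simp
  hence "fact n * ?c = 1" using ge by simp
  thus ?thesis by (simp add: field_simps)
qed

end

context iidJ begin

lemma RR_ev: "{\<omega>\<in>space M. RR k (\<lambda>e. J e \<omega>)} \<in> events"
  unfolding RR_def by measurable
lemma LL_ev: "{\<omega>\<in>space M. LL k (\<lambda>e. J e \<omega>)} \<in> events"
  unfolding LL_def by measurable

lemma ge_eq: "{\<omega>\<in>space M. enat k \<le> Mtilde (\<lambda>e. J e \<omega>)} =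
   {\<omega>\<in>space M. RR k (\<lambda>e. J e \<omega>)} \<union> {\<omega>\<in>space M. LL k (\<lambda>e. J e \<omega>)}"
  using Mtilde_ge walk_char by auto

lemma ge_ev: "{\<omega>\<in>space M. enat k \<le> Mtilde (\<lambda>e. J e \<omega>)} \<in> events"
  unfolding ge_eq using RR_ev LL_ev by auto

lemma RR_prob: "prob {\<omega>\<in>space M. RR k (\<lambda>e. J e \<omega>)} = 1 / fact (k + 2)"
proof -
  have eq: "RR k j \<longleftrightarrow> (\<forall>i. Suc i < k + 2 \<longrightarrow> j (int i - 1) < j (int (Suc i) - 1))" for j
    unfolding RR_def by (auto simp: less_Suc_eq_le)
  have "inj_on (\<lambda>i. int i - 1) {..<k+2}" by (auto simp: inj_on_def)
  from chain_prob[OF this] q_val[of "k+2"] show ?thesis unfolding eq by simp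
qed

lemma LL_prob: "prob {\<omega>\<in>space M. LL k (\<lambda>e. J e \<omega>)} = 1 / fact (k + 2)"
proof -
  define S where "S = {\<omega>\<in>space M. \<forall>i. Suc i < k + 2 \<longrightarrow> J (- int i) \<omega> < J (- int (Suc i)) \<omega>}"
  define N where "N = (\<Union>i\<in>{..k}. {\<omega>\<in>space M. J (- int i) \<omega> = J (- int i - 1) \<omega>})"
  have "inj_on (\<lambda>i. - int i) {..<k+2}" by (auto simp: inj_on_def)
  from chain_prob[OF this] q_val[of "k+2"] have PS: "prob S = 1 / fact (k + 2)" unfolding S_def by simp
  have Sev: "S \<in> events" unfolding S_def by measurable
  have N0: "prob N = 0" unfolding N_def by (intro null_union tie_sets tie) auto
  have Nev: "N \<in> events" unfolding N_def using tie_sets by (intro sets.finite_UN) auto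
  have s1: "S \<subseteq> {\<omega>\<in>space M. LL k (\<lambda>e. J e \<omega>)}"
  proof
    fix \<omega> assume "\<omega> \<in> S"
    hence w: "\<omega> \<in> space M" "\<And>i. Suc i < k + 2 \<Longrightarrow> J (- int i) \<omega> < J (- int (Suc i)) \<omega>"
      unfolding S_def by auto
    have "J (- int i) \<omega> \<le> J (- int i - 1) \<omega>" if "i \<le> k" for i
    proof -
      have e: "- int (Suc i) = - int i - 1" by simp
      have "Suc i < k + 2" using that by simp
      from w(2)[OF this] show ?thesis unfolding e by (rule less_imp_le)
    qed
    thus "\<omega> \<in> {\<omega>\<in>space M. LL k (\<lambda>e. J e \<omega>)}" using w(1) unfolding LL_def by auto
  qed
  have s2: "{\<omega>\<in>space M. LL k (\<lambda>e. J e \<omega>)} \<subseteq> S \<union> N"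
  proof
    fix \<omega> assume w: "\<omega> \<in> {\<omega>\<in>space M. LL k (\<lambda>e. J e \<omega>)}"
    show "\<omega> \<in> S \<union> N"
    proof (cases "\<omega> \<in> N")
      case False
      have "J (- int i) \<omega> < J (- int (Suc i)) \<omega>" if "Suc i < k + 2" for i
      proof -
        have "i \<le> k" using that by simp
        hence "J (- int i) \<omega> \<le> J (- int i - 1) \<omega>" "J (- int i) \<omega> \<noteq> J (- int i - 1) \<omega>"
          using w False unfolding LL_def N_def by auto
        hence "J (- int i) \<omega> < J (- int i - 1) \<omega>" by (simp add: less_le)
        moreover have "- int (Suc i) = - int i - 1" by simp
        ultimately show ?thesis by (simp only:)
      qed
      thus ?thesis using w unfolding S_def by auto
    qed simp
  qed
  have "prob S \<le> prob {\<omega>\<in>space M. LL k (\<lambda>e. J e \<omega>)}"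
    using s1 LL_ev by (intro finite_measure_mono) auto
  moreover have "prob {\<omega>\<in>space M. LL k (\<lambda>e. J e \<omega>)} \<le> prob (S \<union> N)"
    using s2 Sev Nev by (intro finite_measure_mono) auto
  moreover have "prob (S \<union> N) \<le> prob S + prob N"
    by (rule measure_subadditive[OF Sev Nev]) (simp_all add: emeasure_eq_measure)
  ultimately show ?thesis using PS N0 by linarith
qed

lemma ge_prob: "prob {\<omega>\<in>space M. enat k \<le> Mtilde (\<lambda>e. J e \<omega>)} = 2 / fact (k + 2)"
proof -
  have "{\<omega>\<in>space M. RR k (\<lambda>e. J e \<omega>)} \<inter> {\<omega>\<in>space M. LL k (\<lambda>e. J e \<omega>)} = {}"
    using RL_disj by blast
  hence "prob {\<omega>\<in>space M. enat k \<le> Mtilde (\<lambda>e. J e \<omega>)} =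
    prob {\<omega>\<in>space M. RR k (\<lambda>e. J e \<omega>)} + prob {\<omega>\<in>space M. LL k (\<lambda>e. J e \<omega>)}"
    unfolding ge_eq using RR_ev LL_ev by (intro finite_measure_Union) auto
  thus ?thesis using RR_prob LL_prob by simp
qed

lemma eq_prob: "prob {\<omega>\<in>space M. Mtilde (\<lambda>e. J e \<omega>) = enat k} = 2 * (real k + 2) / fact (k + 3)"
proof -
  have seq: "{\<omega>\<in>space M. Mtilde (\<lambda>e. J e \<omega>) = enat k} =
    {\<omega>\<in>space M. enat k \<le> Mtilde (\<lambda>e. J e \<omega>)} - {\<omega>\<in>space M. enat (Suc k) \<le> Mtilde (\<lambda>e. J e \<omega>)}"
  proof -
    have "x = enat k \<longleftrightarrow> enat k \<le> x \<and> \<not> enat (Suc k) \<le> x" for x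
      by (cases x) auto
    thus ?thesis by auto
  qed
  have sub: "{\<omega>\<in>space M. enat (Suc k) \<le> Mtilde (\<lambda>e. J e \<omega>)} \<subseteq> {\<omega>\<in>space M. enat k \<le> Mtilde (\<lambda>e. J e \<omega>)}"
    using order_trans[of "enat k" "enat (Suc k)"] by auto
  have P: "prob {\<omega>\<in>space M. Mtilde (\<lambda>e. J e \<omega>) = enat k} = 2 / fact (k + 2) - 2 / fact (Suc k + 2)"
    unfolding seq using ge_ev sub by (simp add: finite_measure_Diff ge_prob del: add_2_eq_Suc')
  have F: "fact (Suc k + 2) = (real k + 3) * (fact (k + 2) :: real)"
    by (simp add: fact_Suc)
  have F3: "fact (k + 3) = (real k + 3) * (fact (k + 2) :: real)"
    by (simp add: fact_Suc numeral_3_eq_3)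
  have pos: "(fact (k + 2) :: real) > 0" by simp
  have alg: "2 / f - 2 / ((x + 3) * f) = 2 * (x + 2) / ((x + 3) * f)" if "f > 0" "x \<ge> 0" for f x :: real
  proof -
    have h: "x + 3 > 0" using that by simp
    have "(x + 3) * 2 / ((x + 3) * f) = 2 / f"
      using h by (intro nonzero_mult_divide_mult_cancel_left) simp
    hence "2 / f = 2 * (x + 3) / ((x + 3) * f)" by (simp only: mult.commute)
    hence "2 / f - 2 / ((x + 3) * f) = (2 * (x + 3) - 2) / ((x + 3) * f)"
      by (simp only: diff_divide_distrib)
    also have "2 * (x + 3) - 2 = 2 * (x + 2)" by simp
    finally show ?thesis .
  qed
  show ?thesis unfolding P F F3 using alg[OF pos, of "real k"] by simp
qed

lemma ae_fin: "AE \<omega> in M. Mtilde (\<lambda>e. J e \<omega>) \<noteq> \<infinity>"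
proof -
  define N where "N = {\<omega>\<in>space M. Mtilde (\<lambda>e. J e \<omega>) = \<infinity>}"
  have Neq: "N = (\<Inter>k. {\<omega>\<in>space M. enat k \<le> Mtilde (\<lambda>e. J e \<omega>)})"
  proof -
    have "x = \<infinity> \<longleftrightarrow> (\<forall>k. enat k \<le> x)" for x :: enat
    proof
      assume "\<forall>k. enat k \<le> x"
      thus "x = \<infinity>"
      proof (cases x)
        case (enat m)
        assume "\<forall>k. enat k \<le> x"
        hence "enat (Suc m) \<le> enat m" using enat by simp
        thus ?thesis by simp
      qed simp
    qed simp
    thus ?thesis unfolding N_def by auto
  qed
  have Nev: "N \<in> events" unfolding Neq using ge_ev by auto
  have Nle: "prob N \<le> 2 / fact (k + 2)" for k
  proof -
    have "N \<subseteq> {\<omega>\<in>space M. enat k \<le> Mtilde (\<lambda>e. J e \<omega>)}" unfolding Neq by auto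
    hence "prob N \<le> prob {\<omega>\<in>space M. enat k \<le> Mtilde (\<lambda>e. J e \<omega>)}"
      using ge_ev by (intro finite_measure_mono) auto
    thus ?thesis using ge_prob by simp
  qed
  have N0: "prob N = 0"
  proof (rule ccontr)
    assume "prob N \<noteq> 0"
    hence "0 < prob N" using measure_nonneg[of M N] by linarith
    hence "0 < prob N / 2" by simp
    then obtain k where k: "inverse (real (Suc k)) < prob N / 2" using reals_Archimedean by blast
    have "real (Suc k) \<le> real (k + 2)" by simp
    also have "real (k + 2) \<le> real (fact (k + 2))" using fact_ge_self of_nat_mono by blast
    also have "real (fact (k + 2)) = (fact (k + 2) :: real)" by (rule of_nat_fact)
    finally have f: "real (Suc k) \<le> fact (k + 2)" .
    have "2 / fact (k + 2) \<le> 2 / real (Suc k)"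
      using f by (intro divide_left_mono) auto
    also have "\<dots> < prob N" using k by (simp add: field_simps)
    finally show False using Nle[of k] by simp
  qed
  have "{\<omega>\<in>space M. \<not> Mtilde (\<lambda>e. J e \<omega>) \<noteq> \<infinity>} = N" unfolding N_def by auto
  thus ?thesis using AE_iff_measurable[OF Nev] N0 emeasure_eq_measure[of N] by simp
qed

end

theorem mainTheorem5:
  fixes M :: "'a measure" and J :: "int \<Rightarrow> 'a \<Rightarrow> real" and D :: "real measure"
  assumes "prob_space M"
    and "prob_space.indep_vars M (\<lambda>_. borel) J UNIV"
    and "\<And>e. distr M borel (J e) = D"
    and "\<And>x. emeasure D {x} = 0"
    and "emeasure D {0<..} = 1"
  shows "(AE \<omega> in M. Mtilde (\<lambda>e. J e \<omega>) \<noteq> \<infinity>)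
    \<and> (\<forall>k::nat.
         measure M {\<omega> \<in> space M. enat k \<le> Mtilde (\<lambda>e. J e \<omega>)} = 2 / fact (k + 2)
       \<and> measure M {\<omega> \<in> space M. Mtilde (\<lambda>e. J e \<omega>) = enat k}
           = 2 * (real k + 2) / fact (k + 3))"
proof -
  interpret iidJ M J D
    using assms(1-4) by (simp add: iidJ_def iidJ_axioms_def)
  show ?thesis using ae_fin ge_prob eq_prob by blast
qed

end
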